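(* Let $\mathbf{F}:\ell^n\times\ell^m\to\ell^n$ be the strictly causal plant operator $\mathbf{F}(\mathbf{x},\mathbf{u})=(0,f_1(x_0,u_0),f_2(x_{1:0},u_{1:0}),\dots,f_t(x_{t-1:0},u_{t-1:0}),\dots)$ determined by arbitrary functions $f_t:(\mathbb{R}^n)^t\times(\mathbb{R}^m)^t\to\mathbb{R}^n$, $t\ge 1$. Let $\mathbf{\Psi}=(\mathbf{\Psi}^x,\mathbf{\Psi}^u)$ be a causal operator $\ell^n\to\ell^n\times\ell^m$. Then $\mathbf{\Psi}$ is a realizable closed-loop map of $\mathbf{F}$ (i.e. there exists a causal $\mathbf{K}:\ell^n\to\ell^m$ with $\mathbf{\Phi}[\mathbf{F},\mathbf{K}]=\mathbf{\Psi}$) if and only if $$\mathbf{\Psi}^x=\mathbf{F}(\mathbf{\Psi})+\mathbf{I},\qquad\text{i.e. } \mathbf{\Psi}^x(\mathbf{w})=\mathbf{F}(\mathbf{\Psi}^x(\mathbf{w}),\mathbf{\Psi}^u(\mathbf{w}))+\mathbf{w}\ \text{ for all }\mathbf{w}\in\ell^n.$$ Moreover, in this case $\mathbf{\Psi}^x$ has a causal inverse $(\mathbf{\Psi}^x)^{-1}$, and $\mathbf{K}'=\mathbf{\Psi}^u\circ(\mathbf{\Psi}^x)^{-1}$ is the unique causal controller $\mathbf{K}$ satisfying $\mathbf{\Phi}[\mathbf{F},\mathbf{K}]=\mathbf{\Psi}$.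
   Context: $\ell^n$ denotes the space of sequences $\mathbf{x}=(x_0,x_1,\dots)$ with $x_t\in\mathbb{R}^n$; $x_{t:0}$ denotes the tuple $(x_t,x_{t-1},\dots,x_0)$. An operator $\mathbf{A}:\ell^n\to\ell^m$ is causal if there are functions $A_t:(\mathbb{R}^n)^{t+1}\to\mathbb{R}^m$ ("component functions") such that $(\mathbf{A}(\mathbf{x}))_t=A_t(x_{t:0})$ for all $t$ and $\mathbf{x}$; it is strictly causal if moreover $A_t(x_t,x_{t-1:0})=A_t(0,x_{t-1:0})$ for all arguments. Sums of operators are pointwise, products are compositions, $\mathbf{I}$ is the identity, and for $\mathbf{\Psi}=(\mathbf{\Psi}^x,\mathbf{\Psi}^u)$, $\mathbf{F}(\mathbf{\Psi})$ denotes $\mathbf{w}\mapsto\mathbf{F}(\mathbf{\Psi}^x(\mathbf{w}),\mathbf{\Psi}^u(\mathbf{w}))$. Given a causal controller $\mathbf{K}:\ell^n\to\ell^m$ (components $K_t$), the closed loop is $x_t=f_t(x_{t-1:0},u_{t-1:0})+w_t$ for $t\ge1$, $x_0=w_0$, $u_t=K_t(x_{t:0})$; equivalently $\mathbf{x}=\mathbf{F}(\mathbf{x},\mathbf{u})+\mathbf{w}$, $\mathbf{u}=\mathbf{K}(\mathbf{x})$. For each disturbance $\mathbf{w}\in\ell^n$ this has a unique solution $(\mathbf{x},\mathbf{u})$, and the closed-loop map $\mathbf{\Phi}[\mathbf{F},\mathbf{K}]:\ell^n\to\ell^n\times\ell^m$ is defined by $\mathbf{w}\mapsto(\mathbf{x},\mathbf{u})$.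 *)

theory Defs
  imports "HOL-Analysis.Analysis"
begin

text \<open>Sequences in ell^n are functions nat => real^'n. The tuple x_{t:0} is
represented by the list [x_0, ..., x_t] (same information, reversed order).\<close>

definition causal :: "((nat \<Rightarrow> 'a) \<Rightarrow> (nat \<Rightarrow> 'b)) \<Rightarrow> bool" where
  "causal A \<longleftrightarrow> (\<exists>C :: nat \<Rightarrow> 'a list \<Rightarrow> 'b. \<forall>t x. A x t = C t (map x [0..<Suc t]))"

definition plant ::
  "(nat \<Rightarrow> (real^'n) list \<Rightarrow> (real^'m) list \<Rightarrow> real^'n)
    \<Rightarrow> (nat \<Rightarrow> real^'n) \<Rightarrow> (nat \<Rightarrow> real^'m) \<Rightarrow> (nat \<Rightarrow> real^'n)" where
  "plant f x u t = (if t = 0 then 0 else f t (map x [0..<t]) (map u [0..<t]))"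

definition closed_loop ::
  "(nat \<Rightarrow> (real^'n) list \<Rightarrow> (real^'m) list \<Rightarrow> real^'n)
    \<Rightarrow> ((nat \<Rightarrow> real^'n) \<Rightarrow> (nat \<Rightarrow> real^'m))
    \<Rightarrow> (nat \<Rightarrow> real^'n) \<Rightarrow> (nat \<Rightarrow> real^'n) \<times> (nat \<Rightarrow> real^'m)" where
  "closed_loop f K w = (THE p. (\<forall>t. fst p t = plant f (fst p) (snd p) t + w t)
                              \<and> snd p = K (fst p))"

end

theory Submission
  imports Defs
begin

lemma causal_eq:
  assumes "causal A" "\<forall>s\<le>t. x s = y s"
  shows "A x t = A y t"
proof -
  obtain C where C: "\<forall>t x. A x t = C t (map x [0..<Suc t])"
    using assms(1) unfolding causal_def by blast
  have "map x [0..<Suc t] = map y [0..<Suc t]" using assms(2) by (intro map_cong) auto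
  thus ?thesis using C by metis
qed

lemma plant_eq:
  assumes "\<forall>s<t. x s = x' s \<and> u s = u' s"
  shows "plant f x u t = plant f x' u' t"
proof -
  have "map x [0..<t] = map x' [0..<t]" "map u [0..<t] = map u' [0..<t]"
    using assms by (auto intro: map_cong)
  thus ?thesis unfolding plant_def by (simp only:)
qed

primrec gen :: "(nat \<Rightarrow> (real^'n) list \<Rightarrow> (real^'m) list \<Rightarrow> real^'n)
   \<Rightarrow> (nat \<Rightarrow> (real^'n) list \<Rightarrow> real^'m) \<Rightarrow> (nat \<Rightarrow> real^'n) \<Rightarrow> nat \<Rightarrow> (real^'n) list" where
  "gen f C w 0 = []"
| "gen f C w (Suc n) = gen f C w n @
     [(if n = 0 then 0 else f n (gen f C w n) (map (\<lambda>s. C s (take (Suc s) (gen f C w n))) [0..<n])) + w n]"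

lemma gen_len: "length (gen f C w n) = n"
  by (induction n) auto

lemma gen_nth: "i < n \<Longrightarrow> gen f C w n ! i = gen f C w (Suc i) ! i"
proof (induction n)
  case 0 then show ?case by simp
next
  case (Suc n)
  show ?case
  proof (cases "i < n")
    case True
    have "gen f C w (Suc n) ! i = gen f C w n ! i"
      using True by (simp add: nth_append gen_len)
    then show ?thesis using Suc.IH True by simp
  next
    case False
    then have "i = n" using Suc by simp
    then show ?thesis by simp
  qed
qed

lemma gen_map: "gen f C w n = map (\<lambda>t. gen f C w (Suc t) ! t) [0..<n]"
proof (rule nth_equalityI)
  fix i assume "i < length (gen f C w n)"
  then have "i < n" by (simp add: gen_len)
  then show "gen f C w n ! i = map (\<lambda>t. gen f C w (Suc t) ! t) [0..<n] ! i"
    using gen_nth[of i n] by (simp del: gen.simps(2))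
qed (simp add: gen_len)

lemma cl_unique:
  assumes K: "causal K"
  shows "\<exists>!p. (\<forall>t. fst p t = plant f (fst p) (snd p) t + w t) \<and> snd p = K (fst p)"
proof -
  obtain C where C: "\<forall>t x. K x t = C t (map x [0..<Suc t])"
    using K unfolding causal_def by blast
  define x where "x = (\<lambda>t. gen f C w (Suc t) ! t)"
  have gm: "gen f C w n = map x [0..<n]" for n unfolding x_def by (rule gen_map)
  have ex: "\<forall>t. x t = plant f x (K x) t + w t"
  proof
    fix t
    have "x t = gen f C w (Suc t) ! t" by (simp add: x_def)
    also have "\<dots> = (if t = 0 then 0 else f t (gen f C w t) (map (\<lambda>s. C s (take (Suc s) (gen f C w t))) [0..<t])) + w t"
      by (simp add: nth_append gen_len)
    also have "map (\<lambda>s. C s (take (Suc s) (gen f C w t))) [0..<t] = map (K x) [0..<t]"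
      by (rule map_cong) (auto simp: gm C take_map)
    finally show "x t = plant f x (K x) t + w t" by (simp add: plant_def gm)
  qed
  show ?thesis
  proof (rule ex1I[of _ "(x, K x)"])
    show "(\<forall>t. fst (x, K x) t = plant f (fst (x, K x)) (snd (x, K x)) t + w t) \<and> snd (x, K x) = K (fst (x, K x))"
      using ex by simp
  next
    fix p assume p: "(\<forall>t. fst p t = plant f (fst p) (snd p) t + w t) \<and> snd p = K (fst p)"
    have "fst p t = x t \<and> snd p t = K x t" for t
    proof (induction t rule: less_induct)
      case (less t)
      have 1: "fst p t = x t"
        using p ex plant_eq[of t "fst p" x "snd p" "K x" f] less by metis
      have "\<forall>s\<le>t. fst p s = x s" using less 1 by (metis le_neq_implies_less)
      then have "K (fst p) t = K x t" by (rule causal_eq[OF K])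
      then show ?case using 1 p by simp
    qed
    then show "p = (x, K x)" by (simp add: prod_eq_iff fun_eq_iff)
  qed
qed

lemma cl_iff:
  assumes "causal K"
  shows "closed_loop f K w = p \<longleftrightarrow> ((\<forall>t. fst p t = plant f (fst p) (snd p) t + w t) \<and> snd p = K (fst p))"
proof -
  note u = cl_unique[OF assms, of f w]
  show ?thesis unfolding closed_loop_def
    using theI'[OF u] the1_equality[OF u] u by blast
qed

primrec gen2 :: "(nat \<Rightarrow> (real^'n) list \<Rightarrow> (real^'m) list \<Rightarrow> real^'n)
   \<Rightarrow> (nat \<Rightarrow> (real^'n) list \<Rightarrow> real^'n) \<Rightarrow> (nat \<Rightarrow> (real^'n) list \<Rightarrow> real^'m)
   \<Rightarrow> (nat \<Rightarrow> real^'n) \<Rightarrow> nat \<Rightarrow> (real^'n) list" where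
  "gen2 f Cx Cu y 0 = []"
| "gen2 f Cx Cu y (Suc n) = gen2 f Cx Cu y n @
     [y n - (if n = 0 then 0 else f n (map (\<lambda>s. Cx s (take (Suc s) (gen2 f Cx Cu y n))) [0..<n])
                                     (map (\<lambda>s. Cu s (take (Suc s) (gen2 f Cx Cu y n))) [0..<n]))]"

lemma gen2_len: "length (gen2 f Cx Cu y n) = n"
  by (induction n) auto

lemma gen2_nth: "i < n \<Longrightarrow> gen2 f Cx Cu y n ! i = gen2 f Cx Cu y (Suc i) ! i"
proof (induction n)
  case 0 then show ?case by simp
next
  case (Suc n)
  show ?case
  proof (cases "i < n")
    case True
    have "gen2 f Cx Cu y (Suc n) ! i = gen2 f Cx Cu y n ! i"
      using True by (simp add: nth_append gen2_len)
    then show ?thesis using Suc.IH True by simp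
  next
    case False
    then have "i = n" using Suc by simp
    then show ?thesis by simp
  qed
qed

lemma gen2_map: "gen2 f Cx Cu y n = map (\<lambda>t. gen2 f Cx Cu y (Suc t) ! t) [0..<n]"
proof (rule nth_equalityI)
  fix i assume "i < length (gen2 f Cx Cu y n)"
  then have "i < n" by (simp add: gen2_len)
  then show "gen2 f Cx Cu y n ! i = map (\<lambda>t. gen2 f Cx Cu y (Suc t) ! t) [0..<n] ! i"
    using gen2_nth[of i n] by (simp del: gen2.simps(2))
qed (simp add: gen2_len)

lemma gen2_dep: "\<forall>s<n. y s = y' s \<Longrightarrow> gen2 f Cx Cu y n = gen2 f Cx Cu y' n"
  by (induction n) auto

theorem theorem1:
  fixes f :: "nat \<Rightarrow> (real^'n) list \<Rightarrow> (real^'m) list \<Rightarrow> real^'n"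
    and Psix :: "(nat \<Rightarrow> real^'n) \<Rightarrow> (nat \<Rightarrow> real^'n)"
    and Psiu :: "(nat \<Rightarrow> real^'n) \<Rightarrow> (nat \<Rightarrow> real^'m)"
  assumes "causal Psix" and "causal Psiu"
  shows "((\<exists>K :: (nat \<Rightarrow> real^'n) \<Rightarrow> (nat \<Rightarrow> real^'m).
              causal K \<and> closed_loop f K = (\<lambda>w. (Psix w, Psiu w)))
          \<longleftrightarrow> (\<forall>w t. Psix w t = plant f (Psix w) (Psiu w) t + w t))
       \<and> ((\<forall>w t. Psix w t = plant f (Psix w) (Psiu w) t + w t) \<longrightarrow>
          (\<exists>Inv :: (nat \<Rightarrow> real^'n) \<Rightarrow> (nat \<Rightarrow> real^'n).
              causal Inv \<and> (\<forall>w. Inv (Psix w) = w) \<and> (\<forall>y. Psix (Inv y) = y)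
            \<and> causal (Psiu \<circ> Inv)
            \<and> closed_loop f (Psiu \<circ> Inv) = (\<lambda>w. (Psix w, Psiu w))
            \<and> (\<forall>K. causal K \<and> closed_loop f K = (\<lambda>w. (Psix w, Psiu w))
                   \<longrightarrow> K = Psiu \<circ> Inv)))"
proof -
  have fwd: "\<forall>w t. Psix w t = plant f (Psix w) (Psiu w) t + w t"
    if "causal K" "closed_loop f K = (\<lambda>w. (Psix w, Psiu w))" for K
  proof (intro allI)
    fix w t
    have "closed_loop f K w = (Psix w, Psiu w)" using that(2) by simp
    then show "Psix w t = plant f (Psix w) (Psiu w) t + w t"
      using cl_iff[OF that(1)] by simp
  qed
  have main: "\<exists>Inv :: (nat \<Rightarrow> real^'n) \<Rightarrow> (nat \<Rightarrow> real^'n).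
              causal Inv \<and> (\<forall>w. Inv (Psix w) = w) \<and> (\<forall>y. Psix (Inv y) = y)
            \<and> causal (Psiu \<circ> Inv)
            \<and> closed_loop f (Psiu \<circ> Inv) = (\<lambda>w. (Psix w, Psiu w))
            \<and> (\<forall>K. causal K \<and> closed_loop f K = (\<lambda>w. (Psix w, Psiu w))
                   \<longrightarrow> K = Psiu \<circ> Inv)"
    if E: "\<forall>w t. Psix w t = plant f (Psix w) (Psiu w) t + w t"
  proof -
    obtain Cx where Cx: "\<forall>t x. Psix x t = Cx t (map x [0..<Suc t])"
      using assms(1) unfolding causal_def by blast
    obtain Cu where Cu: "\<forall>t x. Psiu x t = Cu t (map x [0..<Suc t])"
      using assms(2) unfolding causal_def by blast
    define Inv where "Inv = (\<lambda>y t. gen2 f Cx Cu y (Suc t) ! t)"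
    have gm: "gen2 f Cx Cu y n = map (Inv y) [0..<n]" for y n
      unfolding Inv_def by (rule gen2_map)
    have Iv: "Inv y t = y t - plant f (Psix (Inv y)) (Psiu (Inv y)) t" for y t
    proof -
      have "Inv y t = y t - (if t = 0 then 0 else f t (map (\<lambda>s. Cx s (take (Suc s) (gen2 f Cx Cu y t))) [0..<t])
                                     (map (\<lambda>s. Cu s (take (Suc s) (gen2 f Cx Cu y t))) [0..<t]))"
        by (simp add: Inv_def nth_append gen2_len)
      also have "map (\<lambda>s. Cx s (take (Suc s) (gen2 f Cx Cu y t))) [0..<t] = map (Psix (Inv y)) [0..<t]"
        by (rule map_cong) (auto simp: gm Cx take_map)
      also have "map (\<lambda>s. Cu s (take (Suc s) (gen2 f Cx Cu y t))) [0..<t] = map (Psiu (Inv y)) [0..<t]"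
        by (rule map_cong) (auto simp: gm Cu take_map)
      finally show ?thesis by (simp add: plant_def)
    qed
    have cI: "causal Inv"
      unfolding causal_def
    proof (intro exI allI)
      fix t y
      show "Inv y t = (\<lambda>t l. gen2 f Cx Cu (\<lambda>s. l ! s) (Suc t) ! t) t (map y [0..<Suc t])"
      proof -
        have "gen2 f Cx Cu y (Suc t) = gen2 f Cx Cu (\<lambda>s. map y [0..<Suc t] ! s) (Suc t)"
          by (rule gen2_dep) (simp del: upt_Suc)
        then show ?thesis unfolding Inv_def by (simp del: gen2.simps)
      qed
    qed
    have r: "Psix (Inv y) = y" for y
    proof
      fix t
      have "Psix (Inv y) t = plant f (Psix (Inv y)) (Psiu (Inv y)) t + Inv y t" using E by blast
      then show "Psix (Inv y) t = y t" using Iv[of y t] by simp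
    qed
    have l: "Inv (Psix w) = w" for w
    proof
      fix t show "Inv (Psix w) t = w t"
      proof (induction t rule: less_induct)
        case (less t)
        have "\<forall>s<t. Psix (Inv (Psix w)) s = Psix w s \<and> Psiu (Inv (Psix w)) s = Psiu w s"
          using less by (auto intro!: causal_eq[OF assms(1)] causal_eq[OF assms(2)])
        then have "plant f (Psix (Inv (Psix w))) (Psiu (Inv (Psix w))) t = plant f (Psix w) (Psiu w) t"
          by (rule plant_eq)
        moreover have "Psix w t = plant f (Psix w) (Psiu w) t + w t" using E by blast
        ultimately show ?case using Iv[of "Psix w" t] by simp
      qed
    qed
    obtain CI where CI: "\<forall>t x. Inv x t = CI t (map x [0..<Suc t])"
      using cI unfolding causal_def by blast
    have cK: "causal (Psiu \<circ> Inv)"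
      unfolding causal_def
    proof (intro exI allI)
      fix t y
      have "(Psiu \<circ> Inv) y t = Cu t (map (Inv y) [0..<Suc t])" by (simp add: Cu)
      also have "map (Inv y) [0..<Suc t] = map (\<lambda>s. CI s (take (Suc s) (map y [0..<Suc t]))) [0..<Suc t]"
        by (rule map_cong) (auto simp: CI take_map simp del: upt_Suc)
      finally show "(Psiu \<circ> Inv) y t = (\<lambda>t l. Cu t (map (\<lambda>s. CI s (take (Suc s) l)) [0..<Suc t])) t (map y [0..<Suc t])"
        by simp
    qed
    have cl: "closed_loop f (Psiu \<circ> Inv) = (\<lambda>w. (Psix w, Psiu w))"
    proof
      fix w show "closed_loop f (Psiu \<circ> Inv) w = (Psix w, Psiu w)"
        using cl_iff[OF cK] E l by simp
    qed
    have un: "K = Psiu \<circ> Inv" if "causal K" "closed_loop f K = (\<lambda>w. (Psix w, Psiu w))" for K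
    proof
      fix y
      have "closed_loop f K (Inv y) = (Psix (Inv y), Psiu (Inv y))" using that(2) by simp
      then have "Psiu (Inv y) = K (Psix (Inv y))" using cl_iff[OF that(1)] by simp
      then show "K y = (Psiu \<circ> Inv) y" using r by simp
    qed
    show ?thesis
      apply (rule exI[of _ Inv])
      apply (intro conjI allI impI)
           apply (rule cI)
          apply (rule l)
         apply (rule r)
        apply (rule cK)
       apply (rule cl)
      apply (erule conjE)
      apply (erule (1) un)
      done
  qed
  show ?thesis
  proof (intro conjI iffI impI)
    assume "\<exists>K :: (nat \<Rightarrow> real^'n) \<Rightarrow> (nat \<Rightarrow> real^'m). causal K \<and> closed_loop f K = (\<lambda>w. (Psix w, Psiu w))"
    then obtain K :: "(nat \<Rightarrow> real^'n) \<Rightarrow> (nat \<Rightarrow> real^'m)" where "causal K" "closed_loop f K = (\<lambda>w. (Psix w, Psiu w))" by blast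
    then show "\<forall>w t. Psix w t = plant f (Psix w) (Psiu w) t + w t" by (rule fwd)
  next
    assume h: "\<forall>w t. Psix w t = plant f (Psix w) (Psiu w) t + w t"
    from main[OF h] obtain Inv :: "(nat \<Rightarrow> real^'n) \<Rightarrow> (nat \<Rightarrow> real^'n)" where
      "causal (Psiu \<circ> Inv)" "closed_loop f (Psiu \<circ> Inv) = (\<lambda>w. (Psix w, Psiu w))" by blast
    then show "\<exists>K :: (nat \<Rightarrow> real^'n) \<Rightarrow> (nat \<Rightarrow> real^'m). causal K \<and> closed_loop f K = (\<lambda>w. (Psix w, Psiu w))" by blast
  next
    assume h: "\<forall>w t. Psix w t = plant f (Psix w) (Psiu w) t + w t"
    show "\<exists>Inv :: (nat \<Rightarrow> real^'n) \<Rightarrow> (nat \<Rightarrow> real^'n).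
              causal Inv \<and> (\<forall>w. Inv (Psix w) = w) \<and> (\<forall>y. Psix (Inv y) = y)
            \<and> causal (Psiu \<circ> Inv)
            \<and> closed_loop f (Psiu \<circ> Inv) = (\<lambda>w. (Psix w, Psiu w))
            \<and> (\<forall>K. causal K \<and> closed_loop f K = (\<lambda>w. (Psix w, Psiu w))
                   \<longrightarrow> K = Psiu \<circ> Inv)" by (rule main[OF h])
  qed
qed

end
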